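(* Let $L$ be a finite-dimensional nilpotent Lie superalgebra with $\dim L'=(r\mid s)$ where $r+s=1$, and suppose $\dim_{\mathbb{F}} L/Z(L)>2$ (total dimension). Then $L$ is not capable.
   Context: All algebras are over a field $\mathbb{F}$ of characteristic $\neq 2,3$. $L'=[L,L]$, $Z(L)$ is the center, $\dim L=(m\mid n)$ means even part of dimension $m$ and odd part of dimension $n$. A Lie superalgebra $L$ is capable if $L\cong H/Z(H)$ for some Lie superalgebra $H$. *)

theory Defs
  imports Main
begin

record ('k, 'v) lsa =
  carrier :: "'v set"
  even    :: "'v set"
  odd     :: "'v set"
  add     :: "'v \<Rightarrow> 'v \<Rightarrow> 'v"
  zero    :: "'v"
  smult   :: "'k \<Rightarrow> 'v \<Rightarrow> 'v"
  br      :: "'v \<Rightarrow> 'v \<Rightarrow> 'v"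

definition vector_space_on :: "('k::field, 'v) lsa \<Rightarrow> bool" where
  "vector_space_on A \<longleftrightarrow>
     zero A \<in> carrier A \<and>
     (\<forall>x\<in>carrier A. \<forall>y\<in>carrier A. add A x y \<in> carrier A) \<and>
     (\<forall>c. \<forall>x\<in>carrier A. smult A c x \<in> carrier A) \<and>
     (\<forall>x\<in>carrier A. \<forall>y\<in>carrier A. \<forall>z\<in>carrier A. add A (add A x y) z = add A x (add A y z)) \<and>
     (\<forall>x\<in>carrier A. \<forall>y\<in>carrier A. add A x y = add A y x) \<and>
     (\<forall>x\<in>carrier A. add A x (zero A) = x) \<and>
     (\<forall>x\<in>carrier A. \<exists>y\<in>carrier A. add A x y = zero A) \<and>
     (\<forall>c d. \<forall>x\<in>carrier A. smult A c (smult A d x) = smult A (c * d) x) \<and>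
     (\<forall>x\<in>carrier A. smult A 1 x = x) \<and>
     (\<forall>c. \<forall>x\<in>carrier A. \<forall>y\<in>carrier A. smult A c (add A x y) = add A (smult A c x) (smult A c y)) \<and>
     (\<forall>c d. \<forall>x\<in>carrier A. smult A (c + d) x = add A (smult A c x) (smult A d x))"

definition subspace_on :: "('k::field, 'v) lsa \<Rightarrow> 'v set \<Rightarrow> bool" where
  "subspace_on A W \<longleftrightarrow> W \<subseteq> carrier A \<and> zero A \<in> W \<and>
     (\<forall>x\<in>W. \<forall>y\<in>W. add A x y \<in> W) \<and> (\<forall>c. \<forall>x\<in>W. smult A c x \<in> W)"

definition hom :: "('k, 'v) lsa \<Rightarrow> nat \<Rightarrow> 'v set" where
  "hom A p = (if p = 0 then even A else odd A)"

definition psign :: "nat \<Rightarrow> nat \<Rightarrow> 'k::field" where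
  "psign p q = (- 1) ^ (p * q)"

definition lie_superalgebra :: "('k::field, 'v) lsa \<Rightarrow> bool" where
  "lie_superalgebra A \<longleftrightarrow>
     vector_space_on A \<and>
     subspace_on A (even A) \<and> subspace_on A (odd A) \<and>
     even A \<inter> odd A = {zero A} \<and>
     (\<forall>x\<in>carrier A. \<exists>e\<in>even A. \<exists>d\<in>odd A. x = add A e d) \<and>
     (\<forall>x\<in>carrier A. \<forall>y\<in>carrier A. br A x y \<in> carrier A) \<and>
     (\<forall>c. \<forall>x\<in>carrier A. \<forall>y\<in>carrier A. \<forall>z\<in>carrier A.
        br A (add A x y) z = add A (br A x z) (br A y z) \<and>
        br A x (add A y z) = add A (br A x y) (br A x z) \<and>
        br A (smult A c x) y = smult A c (br A x y) \<and>
        br A x (smult A c y) = smult A c (br A x y)) \<and>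
     (\<forall>p\<in>{0,1}. \<forall>q\<in>{0,1}. \<forall>x\<in>hom A p. \<forall>y\<in>hom A q.
        br A x y \<in> hom A ((p + q) mod 2)) \<and>
     (\<forall>p\<in>{0,1}. \<forall>q\<in>{0,1}. \<forall>x\<in>hom A p. \<forall>y\<in>hom A q.
        br A x y = smult A (- psign p q) (br A y x)) \<and>
     (\<forall>p\<in>{0,1}. \<forall>q\<in>{0,1}. \<forall>r\<in>{0,1}. \<forall>x\<in>hom A p. \<forall>y\<in>hom A q. \<forall>z\<in>hom A r.
        add A (smult A (psign p r) (br A x (br A y z)))
          (add A (smult A (psign q p) (br A y (br A z x)))
                 (smult A (psign r q) (br A z (br A x y)))) = zero A)"

definition lincomb :: "('k, 'v) lsa \<Rightarrow> 'k list \<Rightarrow> 'v list \<Rightarrow> 'v" where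
  "lincomb A cs vs = foldr (\<lambda>(c, v) acc. add A (smult A c v) acc) (zip cs vs) (zero A)"

definition span_of :: "('k, 'v) lsa \<Rightarrow> 'v set \<Rightarrow> 'v set" where
  "span_of A S = {lincomb A cs vs | cs vs. length cs = length vs \<and> set vs \<subseteq> S}"

definition lin_indep :: "('k::field, 'v) lsa \<Rightarrow> 'v list \<Rightarrow> bool" where
  "lin_indep A vs \<longleftrightarrow> distinct vs \<and>
     (\<forall>cs. length cs = length vs \<longrightarrow> lincomb A cs vs = zero A \<longrightarrow> (\<forall>c\<in>set cs. c = 0))"

definition is_basis :: "('k::field, 'v) lsa \<Rightarrow> 'v set \<Rightarrow> 'v list \<Rightarrow> bool" where
  "is_basis A W vs \<longleftrightarrow> set vs \<subseteq> W \<and> lin_indep A vs \<and> span_of A (set vs) = W"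

definition fin_dim :: "('k::field, 'v) lsa \<Rightarrow> 'v set \<Rightarrow> bool" where
  "fin_dim A W \<longleftrightarrow> (\<exists>vs. is_basis A W vs)"

definition dim :: "('k::field, 'v) lsa \<Rightarrow> 'v set \<Rightarrow> nat" where
  "dim A W = (LEAST n. \<exists>vs. is_basis A W vs \<and> length vs = n)"

definition bracket_span :: "('k, 'v) lsa \<Rightarrow> 'v set \<Rightarrow> 'v set \<Rightarrow> 'v set" where
  "bracket_span A U V = span_of A {br A u v | u v. u \<in> U \<and> v \<in> V}"

definition derived :: "('k, 'v) lsa \<Rightarrow> 'v set" where
  "derived A = bracket_span A (carrier A) (carrier A)"

fun lcs :: "('k, 'v) lsa \<Rightarrow> nat \<Rightarrow> 'v set" where
  "lcs A 0 = carrier A"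
| "lcs A (Suc n) = bracket_span A (lcs A n) (carrier A)"

definition nilpotent :: "('k, 'v) lsa \<Rightarrow> bool" where
  "nilpotent A \<longleftrightarrow> (\<exists>n. lcs A n = {zero A})"

definition center :: "('k, 'v) lsa \<Rightarrow> 'v set" where
  "center A = {z \<in> carrier A. \<forall>x\<in>carrier A. br A z x = zero A}"

definition coset :: "('k, 'v) lsa \<Rightarrow> 'v set \<Rightarrow> 'v \<Rightarrow> 'v set" where
  "coset A I x = {add A x z | z. z \<in> I}"

definition rep :: "'v set \<Rightarrow> 'v" where
  "rep X = (SOME x. x \<in> X)"

definition quotient :: "('k, 'v) lsa \<Rightarrow> 'v set \<Rightarrow> ('k, 'v set) lsa" where
  "quotient A I =
     \<lparr> carrier = coset A I ` carrier A,
       even = coset A I ` even A,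
       odd = coset A I ` odd A,
       add = (\<lambda>X Y. coset A I (add A (rep X) (rep Y))),
       zero = coset A I (zero A),
       smult = (\<lambda>c X. coset A I (smult A c (rep X))),
       br = (\<lambda>X Y. coset A I (br A (rep X) (rep Y))) \<rparr>"

definition lsa_iso :: "('k, 'v) lsa \<Rightarrow> ('k, 'w) lsa \<Rightarrow> bool" where
  "lsa_iso A B \<longleftrightarrow> (\<exists>f. bij_betw f (carrier A) (carrier B) \<and>
     f ` even A = even B \<and> f ` odd A = odd B \<and>
     (\<forall>x\<in>carrier A. \<forall>y\<in>carrier A. f (add A x y) = add B (f x) (f y)) \<and>
     (\<forall>c. \<forall>x\<in>carrier A. f (smult A c x) = smult B c (f x)) \<and>
     (\<forall>x\<in>carrier A. \<forall>y\<in>carrier A. f (br A x y) = br B (f x) (f y)))"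

text \<open>L is capable if L is isomorphic to H/Z(H) for some Lie superalgebra H;
  since HOL cannot quantify over types inside a formula, the carrier type 'h of H
  is an explicit parameter.\<close>
definition capable :: "'h itself \<Rightarrow> ('k::field, 'v) lsa \<Rightarrow> bool" where
  "capable (_ :: 'h itself) L \<longleftrightarrow>
     (\<exists>H :: ('k, 'h) lsa. lie_superalgebra H \<and> lsa_iso L (quotient H (center H)))"

end

theory Submission
  imports Defs
begin


locale VS = fixes A :: "('k::field, 'v) lsa" assumes vs: "vector_space_on A"
begin

lemmas VS = vs[unfolded vector_space_on_def]
lemmas VS0 = VS[THEN conjunct1]
lemmas VS1 = VS[THEN conjunct2, THEN conjunct1]
lemmas VS2 = VS[THEN conjunct2, THEN conjunct2, THEN conjunct1]
lemmas VS3 = VS[THEN conjunct2, THEN conjunct2, THEN conjunct2, THEN conjunct1]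
lemmas VS4 = VS[THEN conjunct2, THEN conjunct2, THEN conjunct2, THEN conjunct2, THEN conjunct1]
lemmas VS5 = VS[THEN conjunct2, THEN conjunct2, THEN conjunct2, THEN conjunct2, THEN conjunct2, THEN conjunct1]
lemmas VS6 = VS[THEN conjunct2, THEN conjunct2, THEN conjunct2, THEN conjunct2, THEN conjunct2, THEN conjunct2, THEN conjunct1]
lemmas VS7 = VS[THEN conjunct2, THEN conjunct2, THEN conjunct2, THEN conjunct2, THEN conjunct2, THEN conjunct2, THEN conjunct2, THEN conjunct1]
lemmas VS8 = VS[THEN conjunct2, THEN conjunct2, THEN conjunct2, THEN conjunct2, THEN conjunct2, THEN conjunct2, THEN conjunct2, THEN conjunct2, THEN conjunct1]
lemmas VS9 = VS[THEN conjunct2, THEN conjunct2, THEN conjunct2, THEN conjunct2, THEN conjunct2, THEN conjunct2, THEN conjunct2, THEN conjunct2, THEN conjunct2, THEN conjunct1]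
lemmas VS10 = VS[THEN conjunct2, THEN conjunct2, THEN conjunct2, THEN conjunct2, THEN conjunct2, THEN conjunct2, THEN conjunct2, THEN conjunct2, THEN conjunct2, THEN conjunct2]

lemma zero_c[simp]: "zero A \<in> carrier A" using VS0 .
lemma add_c[simp]: "x \<in> carrier A \<Longrightarrow> y \<in> carrier A \<Longrightarrow> add A x y \<in> carrier A"
  using VS1 by blast
lemma smult_c[simp]: "x \<in> carrier A \<Longrightarrow> smult A c x \<in> carrier A"
  using VS2 by blast
lemma add_assoc: "x \<in> carrier A \<Longrightarrow> y \<in> carrier A \<Longrightarrow> z \<in> carrier A \<Longrightarrow> add A (add A x y) z = add A x (add A y z)"
  using VS3 by blast
lemma add_comm: "x \<in> carrier A \<Longrightarrow> y \<in> carrier A \<Longrightarrow> add A x y = add A y x"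
  using VS4 by blast
lemma add_lcomm: "x \<in> carrier A \<Longrightarrow> y \<in> carrier A \<Longrightarrow> z \<in> carrier A \<Longrightarrow> add A x (add A y z) = add A y (add A x z)"
  by (metis add_assoc add_comm)
lemma add_0[simp]: "x \<in> carrier A \<Longrightarrow> add A x (zero A) = x"
  using VS5 by blast
lemma add_0_left[simp]: "x \<in> carrier A \<Longrightarrow> add A (zero A) x = x"
  using add_0 add_comm zero_c by metis
lemma inv_ex: "x \<in> carrier A \<Longrightarrow> \<exists>y\<in>carrier A. add A x y = zero A"
  using VS6 by blast
lemma smult_smult[simp]: "x \<in> carrier A \<Longrightarrow> smult A c (smult A d x) = smult A (c * d) x"
  using VS7 by blast
lemma smult_1[simp]: "x \<in> carrier A \<Longrightarrow> smult A 1 x = x"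
  using VS8 by blast
lemma smult_add: "x \<in> carrier A \<Longrightarrow> y \<in> carrier A \<Longrightarrow> smult A c (add A x y) = add A (smult A c x) (smult A c y)"
  using VS9 by blast
lemma add_smult: "x \<in> carrier A \<Longrightarrow> smult A (c + d) x = add A (smult A c x) (smult A d x)"
  using VS10 by blast

lemma cancel_left: assumes "x \<in> carrier A" "y \<in> carrier A" "w \<in> carrier A" "add A x y = add A x w"
  shows "y = w"
proof -
  obtain x' where x': "x' \<in> carrier A" "add A x x' = zero A" using inv_ex assms(1) by blast
  have e: "add A x' x = zero A" using x' assms add_comm by metis
  have "y = add A (add A x' x) y" using e assms by simp
  also have "\<dots> = add A x' (add A x y)" using x' assms by (simp add: add_assoc)
  also have "\<dots> = add A (add A x' x) w" using x' assms by (simp add: add_assoc)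
  also have "\<dots> = w" using e assms by simp
  finally show ?thesis .
qed

lemma idem_zero: "x \<in> carrier A \<Longrightarrow> add A x x = x \<Longrightarrow> x = zero A"
  using cancel_left[of x x "zero A"] by simp

lemma smult_0[simp]: "x \<in> carrier A \<Longrightarrow> smult A 0 x = zero A"
  using add_smult[of x 0 0, symmetric] idem_zero[of "smult A 0 x"] by simp

lemma smult_zero[simp]: "smult A c (zero A) = zero A"
  using smult_add[of "zero A" "zero A" c, symmetric] idem_zero[of "smult A c (zero A)"] by simp

lemma neg_r: "x \<in> carrier A \<Longrightarrow> add A x (smult A (-1) x) = zero A"
  using add_smult[of x 1 "-1"] by simp

lemma neg_l: "x \<in> carrier A \<Longrightarrow> add A (smult A (-1) x) x = zero A"
  using neg_r add_comm by (metis smult_c)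

lemma inv_unique: assumes "x \<in> carrier A" "y \<in> carrier A" "add A x y = zero A"
  shows "y = smult A (-1) x"
  using cancel_left[of x y "smult A (-1) x"] assms neg_r by simp

lemma smult_combine: "x \<in> carrier A \<Longrightarrow> add A (smult A c x) (smult A d x) = smult A (c + d) x"
  by (simp add: add_smult)

lemma smult_eq_zero: assumes "x \<in> carrier A" "smult A c x = zero A" "c \<noteq> 0" shows "x = zero A"
proof -
  have "x = smult A (inverse c) (smult A c x)" using assms(1,3) by simp
  also have "\<dots> = zero A" using assms(2) by simp
  finally show ?thesis .
qed

lemma add_eq_zero_iff_neg: assumes "x \<in> carrier A" "y \<in> carrier A" "add A x y = zero A"
  shows "x = smult A (-1) y"
  using inv_unique[of y x] assms add_comm by simp

lemma lincomb_Nil[simp]: "lincomb A cs [] = zero A" "lincomb A [] vs = zero A"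
  by (auto simp: lincomb_def)
lemma lincomb_Cons[simp]: "lincomb A (c#cs) (v#vs) = add A (smult A c v) (lincomb A cs vs)"
  by (simp add: lincomb_def)

lemma lincomb_c[simp]: "set vs \<subseteq> carrier A \<Longrightarrow> lincomb A cs vs \<in> carrier A"
proof (induction vs arbitrary: cs)
  case (Cons v vs) then show ?case by (cases cs) auto
qed simp

lemma lincomb_in: "subspace_on A W \<Longrightarrow> set vs \<subseteq> W \<Longrightarrow> lincomb A cs vs \<in> W"
proof (induction vs arbitrary: cs)
  case Nil then show ?case by (simp add: subspace_on_def)
next
  case (Cons v vs) then show ?case by (cases cs) (auto simp: subspace_on_def)
qed

lemma lincomb_append: "length cs = length vs \<Longrightarrow> set vs \<subseteq> carrier A \<Longrightarrow> set ws \<subseteq> carrier A \<Longrightarrow>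
  lincomb A (cs @ ds) (vs @ ws) = add A (lincomb A cs vs) (lincomb A ds ws)"
proof (induction vs arbitrary: cs)
  case Nil then show ?case by simp
next
  case (Cons v vs) then show ?case by (cases cs) (auto simp: add_assoc)
qed

lemma lincomb_smult: "set vs \<subseteq> carrier A \<Longrightarrow>
  smult A c (lincomb A cs vs) = lincomb A (map ((*) c) cs) vs"
proof (induction vs arbitrary: cs)
  case Nil then show ?case by simp
next
  case (Cons v vs) then show ?case by (cases cs) (auto simp: smult_add)
qed

lemma lincomb_zeros: "set vs \<subseteq> {zero A} \<Longrightarrow> lincomb A cs vs = zero A"
proof (induction vs arbitrary: cs)
  case Nil then show ?case by simp
next
  case (Cons v vs) then show ?case by (cases cs) auto
qed

lemma span_c: "S \<subseteq> carrier A \<Longrightarrow> span_of A S \<subseteq> carrier A"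
  unfolding span_of_def by auto

lemma span_subspace: assumes "S \<subseteq> carrier A" shows "subspace_on A (span_of A S)"
  unfolding subspace_on_def
proof (intro conjI ballI allI)
  show "span_of A S \<subseteq> carrier A" using span_c assms .
  show "zero A \<in> span_of A S" unfolding span_of_def
    by (rule CollectI, rule exI[of _ "[]"], rule exI[of _ "[]"]) simp
  fix x y assume "x \<in> span_of A S" "y \<in> span_of A S"
  then obtain cs vs ds ws where "x = lincomb A cs vs" "length cs = length vs" "set vs \<subseteq> S"
     "y = lincomb A ds ws" "length ds = length ws" "set ws \<subseteq> S" unfolding span_of_def by blast
  then show "add A x y \<in> span_of A S" unfolding span_of_def
    using lincomb_append[of cs vs ws ds] assms
    by (intro CollectI exI[of _ "cs @ ds"] exI[of _ "vs @ ws"]) auto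
next
  fix c x assume "x \<in> span_of A S"
  then obtain cs vs where "x = lincomb A cs vs" "length cs = length vs" "set vs \<subseteq> S"
    unfolding span_of_def by blast
  then show "smult A c x \<in> span_of A S" unfolding span_of_def
    using lincomb_smult[of vs c cs] assms
    by (intro CollectI exI[of _ "map ((*) c) cs"] exI[of _ vs]) auto
qed

lemma in_span: "v \<in> S \<Longrightarrow> S \<subseteq> carrier A \<Longrightarrow> v \<in> span_of A S"
  unfolding span_of_def
  by (intro CollectI exI[of _ "[1]"] exI[of _ "[v]"]) auto

lemma span_mono: "S \<subseteq> T \<Longrightarrow> span_of A S \<subseteq> span_of A T"
  unfolding span_of_def by blast

lemma span_le: "subspace_on A W \<Longrightarrow> S \<subseteq> W \<Longrightarrow> span_of A S \<subseteq> W"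
  unfolding span_of_def using lincomb_in by blast

lemma span_empty: "span_of A {} = {zero A}"
  unfolding span_of_def by (auto intro!: exI[of _ "[]"])

lemma span_insert_aux: assumes "S \<subseteq> carrier A" "v \<in> carrier A" "set vs \<subseteq> insert v S"
  shows "\<exists>a s. s \<in> span_of A S \<and> lincomb A cs vs = add A (smult A a v) s"
  using assms(3)
proof (induction vs arbitrary: cs)
  case Nil
  have "zero A \<in> span_of A S" using span_subspace[OF assms(1)] by (simp add: subspace_on_def)
  then show ?case using assms by (intro exI[of _ 0] exI[of _ "zero A"]) simp
next
  case (Cons u vs)
  show ?case
  proof (cases cs)
    case Nil
    have "zero A \<in> span_of A S" using span_subspace[OF assms(1)] by (simp add: subspace_on_def)
    then show ?thesis using assms Nil by (intro exI[of _ 0] exI[of _ "zero A"]) simp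
  next
    case (Cons c cs')
    obtain a s where as: "s \<in> span_of A S" "lincomb A cs' vs = add A (smult A a v) s"
      using Cons.IH[of cs'] Cons.prems by auto
    have sc: "s \<in> carrier A" using as span_c assms by blast
    have uc: "u \<in> carrier A" using Cons.prems assms by auto
    show ?thesis
    proof (cases "u = v")
      case True
      have "lincomb A cs (u # vs) = add A (smult A (c + a) v) s"
        using Cons as True sc assms by (simp add: add_assoc[symmetric] smult_combine)
      then show ?thesis using as by blast
    next
      case False
      then have "u \<in> S" using Cons.prems by auto
      then have "add A (smult A c u) s \<in> span_of A S"
        using span_subspace[OF assms(1)] as in_span[of u S] assms
        unfolding subspace_on_def by blast
      moreover have "lincomb A cs (u # vs) = add A (smult A a v) (add A (smult A c u) s)"
        using Cons as sc uc assms by (simp add: add_lcomm)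
      ultimately show ?thesis by blast
    qed
  qed
qed

lemma span_insert: assumes "S \<subseteq> carrier A" "v \<in> carrier A" "x \<in> span_of A (insert v S)"
  shows "\<exists>a s. s \<in> span_of A S \<and> x = add A (smult A a v) s"
  using assms span_insert_aux unfolding span_of_def[of A "insert v S"] by blast

lemma span_single: assumes "v \<in> carrier A" "x \<in> span_of A {v}" shows "\<exists>a. x = smult A a v"
  using span_insert[of "{}" v x] assms span_empty by auto

end


context VS begin

lemma subspace_Int: "subspace_on A U \<Longrightarrow> subspace_on A W \<Longrightarrow> subspace_on A (U \<inter> W)"
  unfolding subspace_on_def by auto

lemma subspace_carrier: "subspace_on A (carrier A)"
  unfolding subspace_on_def by auto

lemma basis_exists:
  assumes "finite S"
  shows "S \<subseteq> carrier A \<Longrightarrow> subspace_on A W \<Longrightarrow> W \<subseteq> span_of A S \<Longrightarrow>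
    \<exists>bs. is_basis A W bs \<and> length bs \<le> card S"
  using assms
proof (induction S arbitrary: W rule: finite_induct)
  case empty
  then have W: "W = {zero A}" using span_empty by (auto simp: subspace_on_def)
  have "is_basis A W []" unfolding is_basis_def lin_indep_def using W span_empty by auto
  then show ?case by auto
next
  case (insert v S)
  have Sc: "S \<subseteq> carrier A" and vc: "v \<in> carrier A" using insert.prems by auto
  have spS: "subspace_on A (span_of A S)" using span_subspace[OF Sc] .
  have Wc: "W \<subseteq> carrier A" using insert.prems(2) by (simp add: subspace_on_def)
  define W' where "W' = W \<inter> span_of A S"
  have W'sub: "subspace_on A W'" unfolding W'_def using subspace_Int[OF insert.prems(2) spS] .
  obtain bs' where bs': "is_basis A W' bs'" "length bs' \<le> card S"
    using insert.IH[OF Sc W'sub] W'_def by blast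
  show ?case
  proof (cases "W \<subseteq> span_of A S")
    case True
    then have "W' = W" unfolding W'_def by blast
    then show ?thesis using bs' insert.hyps by auto
  next
    case False
    then obtain w where w: "w \<in> W" "w \<notin> span_of A S" by blast
    have wc: "w \<in> carrier A" using w Wc by blast
    obtain a s where as: "s \<in> span_of A S" "w = add A (smult A a v) s"
      using span_insert[OF Sc vc] w insert.prems(3) by blast
    have sc: "s \<in> carrier A" using as span_c[OF Sc] by blast
    have a0: "a \<noteq> 0"
    proof
      assume "a = 0" then have "w = s" using as vc sc by simp
      then show False using w as by simp
    qed
    have bs'W': "set bs' \<subseteq> W'" and li': "lin_indep A bs'" and sp': "span_of A (set bs') = W'"
      using bs' unfolding is_basis_def by auto
    have bs'c: "set bs' \<subseteq> carrier A" using bs'W' W'_def Wc by blast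
    have wn: "w \<notin> set bs'" using bs'W' w W'_def by blast
    have indep: "lin_indep A (w # bs')"
      unfolding lin_indep_def
    proof (intro conjI allI impI)
      show "distinct (w # bs')" using wn li' by (simp add: lin_indep_def)
      fix cs assume len: "length cs = length (w # bs')" and eq: "lincomb A cs (w # bs') = zero A"
      then obtain c ds where cs: "cs = c # ds" "length ds = length bs'" by (cases cs) auto
      define l where "l = lincomb A ds bs'"
      have lW': "l \<in> W'" unfolding l_def using lincomb_in[OF W'sub bs'W'] .
      have lc: "l \<in> carrier A" using lincomb_c[OF bs'c] l_def by simp
      have eq2: "add A (smult A c w) l = zero A" using eq cs l_def by simp
      have c0: "c = 0"
      proof (rule ccontr)
        assume c0: "c \<noteq> 0"
        have "smult A c w = smult A (-1) l" using add_eq_zero_iff_neg[OF _ lc eq2] wc by simp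
        then have "w = smult A (inverse c) (smult A (-1) l)"
          using wc c0 by (metis smult_smult left_inverse smult_1)
        moreover have "smult A (inverse c) (smult A (-1) l) \<in> span_of A S"
          using lW' W'_def spS unfolding subspace_on_def by blast
        ultimately show False using w by simp
      qed
      then have "l = zero A" using eq2 wc lc by simp
      then have "\<forall>d\<in>set ds. d = 0" using li' cs l_def unfolding lin_indep_def by metis
      then show "\<forall>c\<in>set cs. c = 0" using c0 cs by simp
    qed
    have span: "span_of A (set (w # bs')) = W"
    proof
      show "span_of A (set (w # bs')) \<subseteq> W"
        using span_le[OF insert.prems(2)] bs'W' w W'_def by auto
      show "W \<subseteq> span_of A (set (w # bs'))"
      proof
        fix x assume xW: "x \<in> W"
        have xc: "x \<in> carrier A" using xW Wc by blast
        obtain b t where bt: "t \<in> span_of A S" "x = add A (smult A b v) t"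
          using span_insert[OF Sc vc] xW insert.prems(3) by blast
        have tc: "t \<in> carrier A" using bt span_c[OF Sc] by blast
        define r where "r = add A x (smult A (- (b / a)) w)"
        have rW: "r \<in> W" unfolding r_def using xW w insert.prems(2) unfolding subspace_on_def by blast
        have "r = add A t (smult A (- (b / a)) s)"
        proof -
          have "smult A (- (b / a)) w = add A (smult A (- b) v) (smult A (- (b / a)) s)"
            using as vc sc a0 by (simp add: smult_add)
          then have "r = add A (add A (smult A b v) t) (add A (smult A (- b) v) (smult A (- (b / a)) s))"
            unfolding r_def bt by simp
          also have "\<dots> = add A t (add A (add A (smult A b v) (smult A (- b) v)) (smult A (- (b / a)) s))"
            using vc tc sc by (simp add: add_assoc add_comm add_lcomm)
          also have "\<dots> = add A t (smult A (- (b / a)) s)"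
            using vc tc sc by (simp add: smult_combine)
          finally show ?thesis .
        qed
        then have "r \<in> span_of A S" using bt as spS unfolding subspace_on_def by blast
        then have "r \<in> span_of A (set bs')" using rW sp' W'_def by blast
        then obtain ds us where dsu: "r = lincomb A ds us" "length ds = length us" "set us \<subseteq> set bs'"
          unfolding span_of_def by blast
        have "x = add A (smult A (b / a) w) r"
        proof -
          have "add A (smult A (b / a) w) r = add A (add A (smult A (b / a) w) (smult A (- (b / a)) w)) x"
            unfolding r_def using xc wc by (simp add: add_assoc add_comm add_lcomm)
          also have "\<dots> = x" using xc wc by (simp add: smult_combine)
          finally show ?thesis by simp
        qed
        then have "x = lincomb A ((b / a) # ds) (w # us)" using dsu by simp
        then show "x \<in> span_of A (set (w # bs'))" unfolding span_of_def using dsu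
          by (intro CollectI exI[of _ "(b / a) # ds"] exI[of _ "w # us"]) auto
      qed
    qed
    have "is_basis A W (w # bs')" unfolding is_basis_def using indep span w bs'W' W'_def by auto
    moreover have "length (w # bs') \<le> card (insert v S)" using bs' insert.hyps by simp
    ultimately show ?thesis by blast
  qed
qed

lemma dim_basis:
  assumes "is_basis A W bs"
  shows "is_basis A W (SOME bs. is_basis A W bs \<and> length bs = dim A W)"
    and "\<exists>bs. is_basis A W bs \<and> length bs = dim A W"
proof -
  have "\<exists>bs. is_basis A W bs \<and> length bs = dim A W"
    unfolding dim_def by (rule LeastI[of _ "length bs"]) (use assms in blast)
  then show "\<exists>bs. is_basis A W bs \<and> length bs = dim A W" .
  then show "is_basis A W (SOME bs. is_basis A W bs \<and> length bs = dim A W)"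
    by (metis (mono_tags, lifting) someI_ex)
qed

lemma dim_le: "is_basis A W bs \<Longrightarrow> dim A W \<le> length bs"
  unfolding dim_def by (rule Least_le) blast

end



lemmas (in VS) add_ac = add_assoc add_comm add_lcomm

locale LSA = fixes A :: "('k::field, 'v) lsa" assumes lsa: "lie_superalgebra A"

lemmas (in LSA) L = lsa[unfolded lie_superalgebra_def]

sublocale LSA \<subseteq> VS using L by (unfold_locales) blast

context LSA begin

lemmas L1 = L[THEN conjunct2, THEN conjunct1]
lemmas L2 = L[THEN conjunct2, THEN conjunct2, THEN conjunct1]
lemmas L3 = L[THEN conjunct2, THEN conjunct2, THEN conjunct2, THEN conjunct1]
lemmas L4 = L[THEN conjunct2, THEN conjunct2, THEN conjunct2, THEN conjunct2, THEN conjunct1]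
lemmas L5 = L[THEN conjunct2, THEN conjunct2, THEN conjunct2, THEN conjunct2, THEN conjunct2, THEN conjunct1]
lemmas L6 = L[THEN conjunct2, THEN conjunct2, THEN conjunct2, THEN conjunct2, THEN conjunct2, THEN conjunct2, THEN conjunct1]
lemmas L7 = L[THEN conjunct2, THEN conjunct2, THEN conjunct2, THEN conjunct2, THEN conjunct2, THEN conjunct2, THEN conjunct2, THEN conjunct1]
lemmas L8 = L[THEN conjunct2, THEN conjunct2, THEN conjunct2, THEN conjunct2, THEN conjunct2, THEN conjunct2, THEN conjunct2, THEN conjunct2, THEN conjunct1]
lemmas L9 = L[THEN conjunct2, THEN conjunct2, THEN conjunct2, THEN conjunct2, THEN conjunct2, THEN conjunct2, THEN conjunct2, THEN conjunct2, THEN conjunct2]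

lemma even_sub: "subspace_on A (even A)" using L1 .
lemma odd_sub: "subspace_on A (odd A)" using L2 .
lemma even_c: "x \<in> even A \<Longrightarrow> x \<in> carrier A" using L1 unfolding subspace_on_def by blast
lemma odd_c: "x \<in> odd A \<Longrightarrow> x \<in> carrier A" using L2 unfolding subspace_on_def by blast
lemma even_add: "x \<in> even A \<Longrightarrow> y \<in> even A \<Longrightarrow> add A x y \<in> even A" using L1 unfolding subspace_on_def by blast
lemma odd_add: "x \<in> odd A \<Longrightarrow> y \<in> odd A \<Longrightarrow> add A x y \<in> odd A" using L2 unfolding subspace_on_def by blast
lemma even_smult: "x \<in> even A \<Longrightarrow> smult A c x \<in> even A" using L1 unfolding subspace_on_def by blast
lemma odd_smult: "x \<in> odd A \<Longrightarrow> smult A c x \<in> odd A" using L2 unfolding subspace_on_def by blast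
lemma eo_int: "x \<in> even A \<Longrightarrow> x \<in> odd A \<Longrightarrow> x = zero A" using L3 by blast
lemma decomp: "x \<in> carrier A \<Longrightarrow> \<exists>e\<in>even A. \<exists>d\<in>odd A. x = add A e d" using L4 by blast
lemma br_c[simp]: "x \<in> carrier A \<Longrightarrow> y \<in> carrier A \<Longrightarrow> br A x y \<in> carrier A" using L5 by blast
lemma br_add_l: "x \<in> carrier A \<Longrightarrow> y \<in> carrier A \<Longrightarrow> z \<in> carrier A \<Longrightarrow> br A (add A x y) z = add A (br A x z) (br A y z)"
  using L6 by blast
lemma br_add_r: "x \<in> carrier A \<Longrightarrow> y \<in> carrier A \<Longrightarrow> z \<in> carrier A \<Longrightarrow> br A x (add A y z) = add A (br A x y) (br A x z)"
  using L6 by blast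
lemma br_smult_l: "x \<in> carrier A \<Longrightarrow> y \<in> carrier A \<Longrightarrow> br A (smult A c x) y = smult A c (br A x y)"
  using L6 by blast
lemma br_smult_r: "x \<in> carrier A \<Longrightarrow> y \<in> carrier A \<Longrightarrow> br A x (smult A c y) = smult A c (br A x y)"
  using L6 by blast

lemma hom_simps[simp]: "hom A 0 = even A" "hom A (Suc 0) = odd A" by (auto simp: hom_def)
lemma hom_c: "p \<in> {0,1} \<Longrightarrow> x \<in> hom A p \<Longrightarrow> x \<in> carrier A" using even_c odd_c by auto

lemma br_grade: "p \<in> {0,1} \<Longrightarrow> q \<in> {0,1} \<Longrightarrow> x \<in> hom A p \<Longrightarrow> y \<in> hom A q \<Longrightarrow> br A x y \<in> hom A ((p + q) mod 2)"
  using L7 by blast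
lemma antisym: "p \<in> {0,1} \<Longrightarrow> q \<in> {0,1} \<Longrightarrow> x \<in> hom A p \<Longrightarrow> y \<in> hom A q \<Longrightarrow> br A x y = smult A (- psign p q) (br A y x)"
  using L8 by blast
lemma jacobi: "p \<in> {0,1} \<Longrightarrow> q \<in> {0,1} \<Longrightarrow> r \<in> {0,1} \<Longrightarrow> x \<in> hom A p \<Longrightarrow> y \<in> hom A q \<Longrightarrow> z \<in> hom A r \<Longrightarrow>
   add A (smult A (psign p r) (br A x (br A y z)))
          (add A (smult A (psign q p) (br A y (br A z x)))
                 (smult A (psign r q) (br A z (br A x y)))) = zero A"
  using L9 by blast

lemma psign_nz: "psign p q \<noteq> (0::'k)" by (simp add: psign_def)

lemma br_zero_l[simp]: "y \<in> carrier A \<Longrightarrow> br A (zero A) y = zero A"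
  using br_smult_l[of "zero A" y 0] by simp
lemma br_zero_r[simp]: "x \<in> carrier A \<Longrightarrow> br A x (zero A) = zero A"
  using br_smult_r[of x "zero A" 0] by simp

lemma antisym0: "p \<in> {0,1} \<Longrightarrow> q \<in> {0,1} \<Longrightarrow> x \<in> hom A p \<Longrightarrow> y \<in> hom A q \<Longrightarrow> br A y x = zero A \<Longrightarrow> br A x y = zero A"
  using antisym[of p q x y] by simp

lemma antisym_nz: "p \<in> {0,1} \<Longrightarrow> q \<in> {0,1} \<Longrightarrow> x \<in> hom A p \<Longrightarrow> y \<in> hom A q \<Longrightarrow> br A y x \<noteq> zero A \<Longrightarrow> br A x y \<noteq> zero A"
  using antisym0 by blast

lemma eo_zero: assumes "e \<in> even A" "d \<in> odd A" "add A e d = zero A"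
  shows "e = zero A" "d = zero A"
proof -
  have ec: "e \<in> carrier A" and dc: "d \<in> carrier A" using assms even_c odd_c by auto
  have "d = smult A (-1) e" using inv_unique[OF ec dc assms(3)] .
  then have "d \<in> even A" using even_smult assms by simp
  then show d0: "d = zero A" using eo_int assms by blast
  then show "e = zero A" using assms ec by simp
qed

lemma hom_sum_zero: assumes "p \<in> {0,1}" "q \<in> {0,1}" "p \<noteq> q" "a \<in> hom A p" "b \<in> hom A q" "add A a b = zero A"
  shows "a = zero A \<and> b = zero A"
proof (cases "p = 0")
  case True
  then have "q = 1" using assms by auto
  then show ?thesis using eo_zero[of a b] assms True by auto
next
  case False
  then have "p = 1" "q = 0" using assms by auto
  moreover have "add A b a = zero A" using assms hom_c add_comm by metis
  ultimately show ?thesis using eo_zero[of b a] assms by auto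
qed

lemma split_zero_l: assumes "u0 \<in> even A" "u1 \<in> odd A" "r \<in> {0,1}" "x \<in> hom A r"
  "br A (add A u0 u1) x = zero A"
  shows "br A u0 x = zero A" "br A u1 x = zero A"
proof -
  have xc: "x \<in> carrier A" using hom_c assms by blast
  have g0: "br A u0 x \<in> hom A ((0 + r) mod 2)" using br_grade[of 0 r u0 x] assms by simp
  have g1: "br A u1 x \<in> hom A ((1 + r) mod 2)" using br_grade[of 1 r u1 x] assms by simp
  have "br A (add A u0 u1) x = add A (br A u0 x) (br A u1 x)"
    by (rule br_add_l) (use assms even_c odd_c xc in auto)
  then have s: "add A (br A u0 x) (br A u1 x) = zero A" using assms(5) by simp
  have "br A u0 x = zero A \<and> br A u1 x = zero A"
    by (rule hom_sum_zero[OF _ _ _ g0 g1 s]) (use assms in auto)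
  then show "br A u0 x = zero A" "br A u1 x = zero A" by auto
qed

lemma split_zero_r: assumes "u0 \<in> even A" "u1 \<in> odd A" "r \<in> {0,1}" "x \<in> hom A r"
  "br A x (add A u0 u1) = zero A"
  shows "br A x u0 = zero A" "br A x u1 = zero A"
proof -
  have xc: "x \<in> carrier A" using hom_c assms by blast
  have g0: "br A x u0 \<in> hom A ((r + 0) mod 2)" using br_grade[of r 0 x u0] assms by simp
  have g1: "br A x u1 \<in> hom A ((r + 1) mod 2)" using br_grade[of r 1 x u1] assms by simp
  have "br A x (add A u0 u1) = add A (br A x u0) (br A x u1)"
    by (rule br_add_r) (use assms even_c odd_c xc in auto)
  then have s: "add A (br A x u0) (br A x u1) = zero A" using assms(5) by simp
  have "br A x u0 = zero A \<and> br A x u1 = zero A"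
    by (rule hom_sum_zero[OF _ _ _ g0 g1 s]) (use assms in auto)
  then show "br A x u0 = zero A" "br A x u1 = zero A" by auto
qed

lemma br_zero_hom_l: assumes "x \<in> carrier A" "y \<in> carrier A"
  "\<And>p u. p \<in> {0,1} \<Longrightarrow> u \<in> hom A p \<Longrightarrow> br A u y = zero A"
  shows "br A x y = zero A"
proof -
  obtain e d where ed: "e \<in> even A" "d \<in> odd A" "x = add A e d" using decomp assms by blast
  have "br A e y = zero A" "br A d y = zero A" using assms(3)[of 0 e] assms(3)[of 1 d] ed by auto
  moreover have "br A (add A e d) y = add A (br A e y) (br A d y)"
    by (rule br_add_l) (use ed even_c odd_c assms in auto)
  ultimately show ?thesis using ed(3) by simp
qed

lemma br_zero_hom_r: assumes "x \<in> carrier A" "y \<in> carrier A"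
  "\<And>p u. p \<in> {0,1} \<Longrightarrow> u \<in> hom A p \<Longrightarrow> br A x u = zero A"
  shows "br A x y = zero A"
proof -
  obtain e d where ed: "e \<in> even A" "d \<in> odd A" "y = add A e d" using decomp assms by blast
  have "br A x e = zero A" "br A x d = zero A" using assms(3)[of 0 e] assms(3)[of 1 d] ed by auto
  moreover have "br A x (add A e d) = add A (br A x e) (br A x d)"
    by (rule br_add_r) (use ed even_c odd_c assms in auto)
  ultimately show ?thesis using ed(3) by simp
qed

lemma center_c: "z \<in> center A \<Longrightarrow> z \<in> carrier A" by (simp add: center_def)
lemma center_l: "z \<in> center A \<Longrightarrow> x \<in> carrier A \<Longrightarrow> br A z x = zero A" by (simp add: center_def)

lemma center_r: assumes "z \<in> center A" "x \<in> carrier A" shows "br A x z = zero A"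
proof (rule br_zero_hom_l[OF assms(2) center_c[OF assms(1)]])
  fix p u assume pu: "p \<in> {0,1}" "u \<in> hom A p"
  obtain e d where ed: "e \<in> even A" "d \<in> odd A" "z = add A e d" using decomp center_c assms by blast
  have "br A (add A e d) u = zero A" using center_l[OF assms(1)] ed(3) pu hom_c by simp
  then have "br A e u = zero A" "br A d u = zero A" using split_zero_l[OF ed(1,2) pu] by auto
  then have "br A u e = zero A" "br A u d = zero A"
    using antisym0[of p 0 u e] antisym0[of p 1 u d] pu ed by auto
  moreover have "br A u (add A e d) = add A (br A u e) (br A u d)"
    by (rule br_add_r) (use ed even_c odd_c pu hom_c in auto)
  ultimately show "br A u z = zero A" using ed(3) by simp
qed

lemma center_sub: "subspace_on A (center A)"
  unfolding subspace_on_def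
proof (intro conjI ballI allI)
  show "center A \<subseteq> carrier A" using center_c by blast
  show "zero A \<in> center A" by (simp add: center_def)
  fix x y assume "x \<in> center A" "y \<in> center A"
  then show "add A x y \<in> center A" by (simp add: center_def br_add_l)
next
  fix c x assume "x \<in> center A"
  then show "smult A c x \<in> center A" by (simp add: center_def br_smult_l)
qed

end



locale QT = VS + fixes I assumes Isub: "subspace_on A I"
begin

abbreviation "cs \<equiv> coset A I"
abbreviation "Q \<equiv> quotient A I"

lemma I_c: "i \<in> I \<Longrightarrow> i \<in> carrier A" using Isub unfolding subspace_on_def by blast
lemma I_0: "zero A \<in> I" using Isub unfolding subspace_on_def by blast
lemma I_add: "i \<in> I \<Longrightarrow> j \<in> I \<Longrightarrow> add A i j \<in> I" using Isub unfolding subspace_on_def by blast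
lemma I_smult: "i \<in> I \<Longrightarrow> smult A c i \<in> I" using Isub unfolding subspace_on_def by blast

lemma coset_mem: "x \<in> carrier A \<Longrightarrow> x \<in> cs x"
  unfolding coset_def using I_0 by (intro CollectI exI[of _ "zero A"]) simp

lemma coset_add_I: assumes "x \<in> carrier A" "i \<in> I" shows "cs (add A x i) = cs x"
proof
  have ic: "i \<in> carrier A" using I_c assms by blast
  show "cs (add A x i) \<subseteq> cs x"
  proof
    fix y assume "y \<in> cs (add A x i)"
    then obtain j where j: "j \<in> I" "y = add A (add A x i) j" unfolding coset_def by blast
    then have "y = add A x (add A i j)" using assms ic I_c add_assoc by simp
    then show "y \<in> cs x" unfolding coset_def using I_add[OF assms(2) j(1)] by blast
  qed
  show "cs x \<subseteq> cs (add A x i)"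
  proof
    fix y assume "y \<in> cs x"
    then obtain j where j: "j \<in> I" "y = add A x j" unfolding coset_def by blast
    have jc: "j \<in> carrier A" using I_c j by blast
    have "add A (add A x i) (add A (smult A (-1) i) j) = add A x (add A (add A i (smult A (-1) i)) j)"
      using assms ic jc by (simp add: add_ac)
    also have "\<dots> = y" using neg_r ic jc j by simp
    finally show "y \<in> cs (add A x i)" unfolding coset_def
      using I_add[OF I_smult[OF assms(2)] j(1)] by (intro CollectI exI[of _ "add A (smult A (-1) i) j"]) simp
  qed
qed

lemma coset_eq: "x \<in> carrier A \<Longrightarrow> cs x = cs y \<Longrightarrow> \<exists>i\<in>I. x = add A y i"
  using coset_mem[of x] unfolding coset_def by auto

lemma rep_coset: assumes "x \<in> carrier A" shows "\<exists>i\<in>I. rep (cs x) = add A x i"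
proof -
  have "rep (cs x) \<in> cs x" unfolding rep_def using coset_mem[OF assms] by (rule someI)
  then show ?thesis unfolding coset_def by blast
qed

lemma q_carrier: "carrier Q = cs ` carrier A" by (simp add: quotient_def)
lemma q_even: "even Q = cs ` even A" by (simp add: quotient_def)
lemma q_odd: "odd Q = cs ` odd A" by (simp add: quotient_def)
lemma q_zero: "zero Q = cs (zero A)" by (simp add: quotient_def)

lemma q_add: assumes "x \<in> carrier A" "y \<in> carrier A" shows "add Q (cs x) (cs y) = cs (add A x y)"
proof -
  obtain i j where ij: "i \<in> I" "j \<in> I" "rep (cs x) = add A x i" "rep (cs y) = add A y j"
    using rep_coset assms by metis
  have ic: "i \<in> carrier A" "j \<in> carrier A" using ij I_c by auto
  have "add Q (cs x) (cs y) = cs (add A (add A x i) (add A y j))" using ij by (simp add: quotient_def)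
  also have "add A (add A x i) (add A y j) = add A (add A x y) (add A i j)" using assms ic by (simp add: add_ac)
  also have "cs \<dots> = cs (add A x y)" using coset_add_I assms I_add ij by simp
  finally show ?thesis .
qed

lemma q_smult: assumes "x \<in> carrier A" shows "smult Q c (cs x) = cs (smult A c x)"
proof -
  obtain i where i: "i \<in> I" "rep (cs x) = add A x i" using rep_coset assms by metis
  have ic: "i \<in> carrier A" using i I_c by auto
  have "smult Q c (cs x) = cs (smult A c (add A x i))" using i by (simp add: quotient_def)
  also have "smult A c (add A x i) = add A (smult A c x) (smult A c i)" using assms ic by (simp add: smult_add)
  also have "cs \<dots> = cs (smult A c x)" using coset_add_I assms I_smult i by simp
  finally show ?thesis .
qed

lemma q_vs: "vector_space_on Q"
  unfolding vector_space_on_def q_carrier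
proof (intro conjI; (intro ballI allI)?)
  show "zero Q \<in> cs ` carrier A" using q_zero by simp
  fix X Y assume "X \<in> cs ` carrier A" "Y \<in> cs ` carrier A"
  then obtain x y where "x \<in> carrier A" "y \<in> carrier A" "X = cs x" "Y = cs y" by blast
  then show "add Q X Y \<in> cs ` carrier A" "add Q X Y = add Q Y X" using q_add add_comm by auto
next
  fix c X assume "X \<in> cs ` carrier A"
  then obtain x where "x \<in> carrier A" "X = cs x" by blast
  then show "smult Q c X \<in> cs ` carrier A" using q_smult by auto
next
  fix X Y Z assume "X \<in> cs ` carrier A" "Y \<in> cs ` carrier A" "Z \<in> cs ` carrier A"
  then obtain x y z where "x \<in> carrier A" "y \<in> carrier A" "z \<in> carrier A" "X = cs x" "Y = cs y" "Z = cs z" by blast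
  then show "add Q (add Q X Y) Z = add Q X (add Q Y Z)" using q_add add_assoc by auto
next
  fix X assume "X \<in> cs ` carrier A"
  then obtain x where x: "x \<in> carrier A" "X = cs x" by blast
  then show "add Q X (zero Q) = X" using q_add q_zero by simp
  show "\<exists>Y\<in>cs ` carrier A. add Q X Y = zero Q"
    using x q_add q_zero neg_r by (intro bexI[of _ "cs (smult A (-1) x)"]) auto
  show "smult Q 1 X = X" using x q_smult by simp
  fix c d
  show "smult Q c (smult Q d X) = smult Q (c * d) X" using x q_smult by simp
  show "smult Q (c + d) X = add Q (smult Q c X) (smult Q d X)" using x q_smult q_add add_smult by simp
next
  fix c X Y assume "X \<in> cs ` carrier A" "Y \<in> cs ` carrier A"
  then obtain x y where "x \<in> carrier A" "y \<in> carrier A" "X = cs x" "Y = cs y" by blast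
  then show "smult Q c (add Q X Y) = add Q (smult Q c X) (smult Q c Y)" using q_add q_smult smult_add by simp
qed

end

context LSA begin

interpretation Z: QT A "center A" by unfold_locales (rule center_sub)

lemma q_br: assumes "x \<in> carrier A" "y \<in> carrier A"
  shows "br (quotient A (center A)) (coset A (center A) x) (coset A (center A) y) = coset A (center A) (br A x y)"
proof -
  obtain i j where ij: "i \<in> center A" "j \<in> center A" "rep (Z.cs x) = add A x i" "rep (Z.cs y) = add A y j"
    using Z.rep_coset assms by metis
  have ic: "i \<in> carrier A" "j \<in> carrier A" using ij center_c by auto
  have "br Z.Q (Z.cs x) (Z.cs y) = Z.cs (br A (add A x i) (add A y j))" using ij by (simp add: quotient_def)
  also have "br A (add A x i) (add A y j) = br A x y"
    using assms ic center_l[OF ij(1)] center_r[OF ij(2)] by (simp add: br_add_l br_add_r)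
  finally show ?thesis .
qed

end




sublocale LSA \<subseteq> Z: QT A "center A" by unfold_locales (rule center_sub)

context VS begin

lemma basis_len0: "is_basis A W [] \<Longrightarrow> W = {zero A}"
  unfolding is_basis_def using span_empty by simp

lemma basis_len1: assumes "is_basis A W [z]" "W \<subseteq> carrier A"
  shows "z \<in> W" "z \<noteq> zero A" "W \<subseteq> range (\<lambda>c. smult A c z)"
proof -
  have W: "W = span_of A {z}" and zW: "z \<in> W" and li: "lin_indep A [z]" using assms unfolding is_basis_def by auto
  show "z \<in> W" by fact
  have zc: "z \<in> carrier A" using zW assms(2) by blast
  show "z \<noteq> zero A"
  proof
    assume "z = zero A"
    then have "lincomb A [1] [z] = zero A" by simp
    moreover have "length [1::'k] = length [z]" by simp
    ultimately have "\<forall>c\<in>set [1::'k]. c = 0" using li unfolding lin_indep_def by blast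
    then show False by simp
  qed
  show "W \<subseteq> range (\<lambda>c. smult A c z)" using span_single[OF zc] W by blast
qed

lemma mult_closed_add: assumes "z \<in> carrier A" "u = smult A a z" "v = smult A b z"
  shows "\<exists>c. add A u v = smult A c z"
  using assms smult_combine by blast

end

context LSA begin

lemma derived_sub: "subspace_on A (derived A)"
  unfolding derived_def bracket_span_def by (rule span_subspace) auto

lemma br_derived: "x \<in> carrier A \<Longrightarrow> y \<in> carrier A \<Longrightarrow> br A x y \<in> derived A"
  unfolding derived_def bracket_span_def by (rule in_span) auto

lemma derived_c: "derived A \<subseteq> carrier A" using derived_sub unfolding subspace_on_def by blast

lemma fd_basis: assumes fd: "fin_dim A (carrier A)" "subspace_on A W" shows "\<exists>bs. is_basis A W bs \<and> length bs = dim A W"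
proof -
  obtain vs where vs: "is_basis A (carrier A) vs" using fd unfolding fin_dim_def by blast
  have "set vs \<subseteq> carrier A" "carrier A = span_of A (set vs)" using vs unfolding is_basis_def by auto
  moreover have "W \<subseteq> carrier A" using assms unfolding subspace_on_def by blast
  ultimately obtain bs where "is_basis A W bs" using basis_exists[of "set vs" W] assms by auto
  then show ?thesis using dim_basis by blast
qed

lemma derived_z:
  assumes fd: "fin_dim A (carrier A)"
    and dimL': "dim A (derived A \<inter> even A) + dim A (derived A \<inter> odd A) = 1"
  shows "\<exists>z. z \<in> carrier A \<and> z \<noteq> zero A \<and> z \<in> derived A \<and>
     (\<forall>x\<in>carrier A. \<forall>y\<in>carrier A. \<exists>c. br A x y = smult A c z)"
proof -
  obtain bE where bE: "is_basis A (derived A \<inter> even A) bE" "length bE = dim A (derived A \<inter> even A)"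
    using fd_basis[OF fd subspace_Int[OF derived_sub even_sub]] by blast
  obtain bO where bO: "is_basis A (derived A \<inter> odd A) bO" "length bO = dim A (derived A \<inter> odd A)"
    using fd_basis[OF fd subspace_Int[OF derived_sub odd_sub]] by blast
  have "\<exists>z. z \<noteq> zero A \<and> z \<in> derived A \<and> derived A \<inter> even A \<subseteq> range (\<lambda>c. smult A c z)
      \<and> derived A \<inter> odd A \<subseteq> range (\<lambda>c. smult A c z)"
  proof (cases "length bE = 0")
    case True
    then have "length bO = 1" using bE bO dimL' by simp
    then obtain z where "bO = [z]" by (cases bO) auto
    then have z: "z \<in> derived A \<inter> odd A" "z \<noteq> zero A" "derived A \<inter> odd A \<subseteq> range (\<lambda>c. smult A c z)"
      using basis_len1[of "derived A \<inter> odd A" z] bO derived_c by auto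
    have zc: "z \<in> carrier A" using z derived_c by blast
    have "derived A \<inter> even A = {zero A}" using basis_len0 bE True by simp
    then have "derived A \<inter> even A \<subseteq> range (\<lambda>c. smult A c z)" using zc by (auto intro!: range_eqI[of _ _ 0])
    then show ?thesis using z by blast
  next
    case False
    then have "length bE = 1" "length bO = 0" using bE bO dimL' by auto
    then obtain z where "bE = [z]" "bO = []" by (cases bE) auto
    then have z: "z \<in> derived A \<inter> even A" "z \<noteq> zero A" "derived A \<inter> even A \<subseteq> range (\<lambda>c. smult A c z)"
      using basis_len1[of "derived A \<inter> even A" z] bE derived_c by auto
    have zc: "z \<in> carrier A" using z derived_c by blast
    have "derived A \<inter> odd A = {zero A}" using basis_len0 bO \<open>bO = []\<close> by simp
    then have "derived A \<inter> odd A \<subseteq> range (\<lambda>c. smult A c z)" using zc by (auto intro!: range_eqI[of _ _ 0])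
    then show ?thesis using z by blast
  qed
  then obtain z where z: "z \<noteq> zero A" "z \<in> derived A" "derived A \<inter> even A \<subseteq> range (\<lambda>c. smult A c z)"
      "derived A \<inter> odd A \<subseteq> range (\<lambda>c. smult A c z)" by blast
  have zc: "z \<in> carrier A" using z derived_c by blast
  have hh: "\<exists>c. br A x y = smult A c z" if "p \<in> {0,1}" "q \<in> {0,1}" "x \<in> hom A p" "y \<in> hom A q" for p q x y
  proof -
    have "br A x y \<in> derived A" using br_derived hom_c that by blast
    moreover have "br A x y \<in> hom A ((p + q) mod 2)" using br_grade that by blast
    moreover have "(p + q) mod 2 = 0 \<or> (p + q) mod 2 = 1" by auto
    ultimately have "br A x y \<in> derived A \<inter> even A \<or> br A x y \<in> derived A \<inter> odd A" by auto
    then show ?thesis using z by blast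
  qed
  have h1: "\<exists>c. br A x y = smult A c z" if th: "p \<in> {0,1}" "x \<in> hom A p" "y \<in> carrier A" for p x y
  proof -
    obtain e d where ed: "e \<in> even A" "d \<in> odd A" "y = add A e d" using decomp th by blast
    have "br A x y = add A (br A x e) (br A x d)" using ed br_add_r even_c odd_c hom_c th by simp
    moreover obtain a b where "br A x e = smult A a z" "br A x d = smult A b z"
      using hh[of p 0 x e] hh[of p 1 x d] th ed by auto
    ultimately show ?thesis using mult_closed_add[OF zc] by simp
  qed
  have "\<exists>c. br A x y = smult A c z" if th: "x \<in> carrier A" "y \<in> carrier A" for x y
  proof -
    obtain e d where ed: "e \<in> even A" "d \<in> odd A" "x = add A e d" using decomp th by blast
    have "br A x y = add A (br A e y) (br A d y)" using ed br_add_l even_c odd_c th by simp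
    moreover obtain a b where "br A e y = smult A a z" "br A d y = smult A b z"
      using h1[of 0 e y] h1[of 1 d y] th ed by auto
    ultimately show ?thesis using mult_closed_add[OF zc] by simp
  qed
  then show ?thesis using z zc by blast
qed

end



context VS begin
lemma cancel_add_neg: assumes "u \<in> carrier A" "y \<in> carrier A"
  shows "add A (add A u (smult A (- t) y)) (smult A t y) = u"
proof -
  have "add A (add A u (smult A (- t) y)) (smult A t y) = add A u (add A (smult A (- t) y) (smult A t y))"
    by (rule add_assoc) (use assms in auto)
  also have "add A (smult A (- t) y) (smult A t y) = smult A (- t + t) y" by (rule smult_combine) (use assms in auto)
  also have "- t + t = 0" by simp
  finally show ?thesis using assms by simp
qed
end

context LSA begin

lemma lin_br_l: assumes "w \<in> carrier A" "y \<in> carrier A" "x \<in> carrier A" "z \<in> carrier A"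
  "br A w x = smult A b z" "br A y x = smult A d z"
  shows "br A (add A w (smult A s y)) x = smult A (b + s * d) z"
proof -
  have "br A (add A w (smult A s y)) x = add A (br A w x) (br A (smult A s y) x)"
    by (rule br_add_l) (use assms in auto)
  also have "br A (smult A s y) x = smult A s (br A y x)" by (rule br_smult_l) (use assms in auto)
  also have "br A y x = smult A d z" by (rule assms(6))
  also have "smult A s (smult A d z) = smult A (s * d) z" by (rule smult_smult) (rule assms(4))
  also have "br A w x = smult A b z" by (rule assms(5))
  also have "add A (smult A b z) (smult A (s * d) z) = smult A (b + s * d) z" by (rule smult_combine) (rule assms(4))
  finally show ?thesis .
qed

lemma all_br_zero_derived: assumes "\<forall>u\<in>carrier A. \<forall>v\<in>carrier A. br A u v = zero A"
  shows "derived A = {zero A}"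
proof -
  have S: "{br A u v | u v. u \<in> carrier A \<and> v \<in> carrier A} \<subseteq> {zero A}" using assms by auto
  have "w = zero A" if th: "w \<in> derived A" for w
  proof -
    obtain cs vs where o: "w = lincomb A cs vs" "set vs \<subseteq> {br A u v | u v. u \<in> carrier A \<and> v \<in> carrier A}"
      using th unfolding derived_def bracket_span_def span_of_def by blast
    have "set vs \<subseteq> {zero A}" using subset_trans[OF o(2) S] .
    then show ?thesis using o(1) lincomb_zeros by simp
  qed
  then show ?thesis using derived_sub unfolding subspace_on_def by blast
qed

lemma span2:
  assumes z: "z \<in> carrier A" "z \<noteq> zero A" "z \<in> derived A"
    and zm: "\<forall>x\<in>carrier A. \<forall>y\<in>carrier A. \<exists>c. br A x y = smult A c z"
    and p: "p \<in> {0,1}" and x: "x \<in> hom A p"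
    and N: "\<And>q1 q2 a b. q1 \<in> {0,1} \<Longrightarrow> q2 \<in> {0,1} \<Longrightarrow> a \<in> hom A q1 \<Longrightarrow> b \<in> hom A q2 \<Longrightarrow>
              br A a x = zero A \<Longrightarrow> br A b x = zero A \<Longrightarrow> br A a b = zero A"
  shows "\<exists>x1\<in>carrier A. \<exists>y1\<in>carrier A. \<forall>v\<in>carrier A. \<exists>\<alpha> \<beta>. \<exists>c\<in>center A.
            v = add A (add A (smult A \<alpha> x1) (smult A \<beta> y1)) c"
proof -
  have xc: "x \<in> carrier A" using hom_c p x by blast
  have Kh: "br A a v = zero A" if "q \<in> {0,1}" "a \<in> hom A q" "v \<in> carrier A" "br A a x = zero A" "br A v x = zero A" for q a v
  proof -
    note th = that
    obtain e d where ed: "e \<in> even A" "d \<in> odd A" "v = add A e d" using decomp th by blast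
    have "br A e x = zero A" "br A d x = zero A" using split_zero_l[OF ed(1,2) p x] th ed by auto
    then have "br A a e = zero A" "br A a d = zero A" using N[of q 0 a e] N[of q 1 a d] th ed by auto
    moreover have "br A a v = add A (br A a e) (br A a d)" using ed th hom_c even_c odd_c br_add_r by simp
    ultimately show ?thesis using th by simp
  qed
  have K: "br A u v = zero A" if "u \<in> carrier A" "v \<in> carrier A" "br A u x = zero A" "br A v x = zero A" for u v
  proof -
    note th = that
    obtain e d where ed: "e \<in> even A" "d \<in> odd A" "u = add A e d" using decomp th by blast
    have "br A e x = zero A" "br A d x = zero A" using split_zero_l[OF ed(1,2) p x] th ed by auto
    then have "br A e v = zero A" "br A d v = zero A" using Kh[of 0 e v] Kh[of 1 d v] th ed by auto
    moreover have "br A u v = add A (br A e v) (br A d v)" using ed th even_c odd_c br_add_l by simp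
    ultimately show ?thesis using th by simp
  qed
  have "\<exists>y0\<in>carrier A. br A y0 x \<noteq> zero A"
  proof (rule ccontr)
    assume "\<not> ?thesis"
    then have "\<forall>u\<in>carrier A. \<forall>v\<in>carrier A. br A u v = zero A" using K by blast
    then show False using all_br_zero_derived z by simp
  qed
  then obtain y0 where y0: "y0 \<in> carrier A" "br A y0 x \<noteq> zero A" by blast
  have "\<exists>q\<in>{0,1}. \<exists>y\<in>hom A q. br A y x \<noteq> zero A"
  proof (rule ccontr)
    assume "\<not> ?thesis"
    then have "br A y0 x = zero A" using br_zero_hom_l[OF y0(1) xc] by blast
    then show False using y0 by simp
  qed
  then obtain q y where qy: "q \<in> {0,1}" "y \<in> hom A q" "br A y x \<noteq> zero A" by blast
  have yc: "y \<in> carrier A" using qy hom_c by blast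
  show ?thesis
  proof (cases "br A x x = zero A")
    case False
    obtain \<kappa> where ka: "br A x x = smult A \<kappa> z" using zm xc by blast
    have k0: "\<kappa> \<noteq> 0" using ka False z by auto
    define kk where "kk w = add A w (smult A (- (SOME b. br A w x = smult A b z) / \<kappa>) x)" for w
    have kk: "kk w \<in> carrier A \<and> br A (kk w) x = zero A \<and> w = add A (kk w) (smult A ((SOME b. br A w x = smult A b z) / \<kappa>) x)"
      if "w \<in> carrier A" for w
    proof -
      define b where "b = (SOME b. br A w x = smult A b z)"
      have b: "br A w x = smult A b z" unfolding b_def by (rule someI_ex) (use zm that xc in blast)
      have "br A (kk w) x = smult A (b + (- b / \<kappa>) * \<kappa>) z"
        unfolding kk_def b_def[symmetric] by (rule lin_br_l[OF that xc xc z(1) b ka])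
      also have "b + (- b / \<kappa>) * \<kappa> = 0" using k0 by simp
      finally have "br A (kk w) x = zero A" using z by simp
      moreover have "w = add A (kk w) (smult A (b / \<kappa>) x)"
        unfolding kk_def b_def[symmetric] using cancel_add_neg[OF that xc, of "b / \<kappa>"] by simp
      ultimately show ?thesis using that xc b_def unfolding kk_def by simp
    qed
    have kkc: "kk w \<in> carrier A" and kkx: "br A (kk w) x = zero A"
      and kke: "w = add A (kk w) (smult A ((SOME b. br A w x = smult A b z) / \<kappa>) x)"
      if "w \<in> carrier A" for w using kk[OF that] by blast+
    show ?thesis
    proof (intro bexI[of _ x] ballI)
      fix v assume vc: "v \<in> carrier A"
      define c where "c = kk v"
      have cc: "c \<in> center A"
        unfolding center_def
      proof (intro CollectI conjI ballI)
        show "c \<in> carrier A" using kk vc c_def by blast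
        fix w assume wc: "w \<in> carrier A"
        define t where "t = (SOME b. br A w x = smult A b z) / \<kappa>"
        have "br A c w = br A c (add A (kk w) (smult A t x))" unfolding t_def by (rule arg_cong[OF kke[OF wc]])
        also have "\<dots> = add A (br A c (kk w)) (smult A t (br A c x))"
          using kkc wc vc c_def xc by (simp add: br_add_r br_smult_r)
        also have "\<dots> = zero A" using K[OF _ kkc[OF wc] _ kkx[OF wc]] kkc kkx wc vc c_def xc by simp
        finally show "br A c w = zero A" .
      qed
      have "v = add A c (smult A ((SOME b. br A v x = smult A b z) / \<kappa>) x)" unfolding c_def by (rule kke[OF vc])
      then have "v = add A (add A (smult A ((SOME b. br A v x = smult A b z) / \<kappa>) x) (smult A 0 x)) c"
        using xc cc center_c by (simp add: add_comm)
      then show "\<exists>\<alpha> \<beta>. \<exists>c\<in>center A. v = add A (add A (smult A \<alpha> x) (smult A \<beta> x)) c" using cc by blast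
    qed (use xc in simp_all)
  next
    case True
    note xx = True
    obtain \<delta> where de: "br A y x = smult A \<delta> z" using zm xc yc by blast
    have d0: "\<delta> \<noteq> 0" using de qy z by auto
    have xy: "br A x y \<noteq> zero A" using antisym_nz[OF p qy(1) x qy(2) qy(3)] .
    obtain \<kappa> where ka: "br A x y = smult A \<kappa> z" using zm xc yc by blast
    have k0: "\<kappa> \<noteq> 0" using ka xy z by auto
    define kk where "kk w = add A w (smult A (- (SOME b. br A w x = smult A b z) / \<delta>) y)" for w
    have kk: "kk w \<in> carrier A \<and> br A (kk w) x = zero A \<and> w = add A (kk w) (smult A ((SOME b. br A w x = smult A b z) / \<delta>) y)"
      if "w \<in> carrier A" for w
    proof -
      define b where "b = (SOME b. br A w x = smult A b z)"
      have b: "br A w x = smult A b z" unfolding b_def by (rule someI_ex) (use zm that xc in blast)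
      have "br A (kk w) x = smult A (b + (- b / \<delta>) * \<delta>) z"
        unfolding kk_def b_def[symmetric] by (rule lin_br_l[OF that yc xc z(1) b de])
      also have "b + (- b / \<delta>) * \<delta> = 0" using d0 by simp
      finally have "br A (kk w) x = zero A" using z by simp
      moreover have "w = add A (kk w) (smult A (b / \<delta>) y)"
        unfolding kk_def b_def[symmetric] using cancel_add_neg[OF that yc, of "b / \<delta>"] by simp
      ultimately show ?thesis using that yc b_def unfolding kk_def by simp
    qed
    have kkc: "kk w \<in> carrier A" and kkx: "br A (kk w) x = zero A"
      and kke: "w = add A (kk w) (smult A ((SOME b. br A w x = smult A b z) / \<delta>) y)"
      if "w \<in> carrier A" for w using kk[OF that] by blast+
    show ?thesis
    proof (rule bexI[of _ x], rule bexI[of _ y], rule ballI)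
      fix v assume vc: "v \<in> carrier A"
      have kv: "kk v \<in> carrier A" "br A (kk v) x = zero A" using kkc kkx vc by auto
      obtain \<epsilon> where ep: "br A (kk v) y = smult A \<epsilon> z" using zm kv yc by blast
      define c where "c = add A (kk v) (smult A (- (\<epsilon> / \<kappa>)) x)"
      have ccar: "c \<in> carrier A" using c_def kv xc by simp
      have cx: "br A c x = zero A"
        using c_def kv xc xx by (simp add: br_add_l br_smult_l)
      have "br A c y = smult A (\<epsilon> + (- (\<epsilon> / \<kappa>)) * \<kappa>) z"
        unfolding c_def by (rule lin_br_l[OF kv(1) xc yc z(1) ep ka])
      also have "\<epsilon> + (- (\<epsilon> / \<kappa>)) * \<kappa> = 0" using k0 by simp
      finally have cy: "br A c y = zero A" using z by simp
      have cc: "c \<in> center A"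
        unfolding center_def
      proof (intro CollectI conjI ballI)
        show "c \<in> carrier A" by fact
        fix w assume wc: "w \<in> carrier A"
        define t where "t = (SOME b. br A w x = smult A b z) / \<delta>"
        have "br A c w = br A c (add A (kk w) (smult A t y))" unfolding t_def by (rule arg_cong[OF kke[OF wc]])
        also have "\<dots> = add A (br A c (kk w)) (smult A t (br A c y))"
          using kkc wc ccar yc by (simp add: br_add_r br_smult_r)
        also have "\<dots> = zero A" using K[OF ccar kkc[OF wc] cx kkx[OF wc]] cy by simp
        finally show "br A c w = zero A" .
      qed
      define \<beta> where "\<beta> = (SOME b. br A v x = smult A b z) / \<delta>"
      have e1: "v = add A (kk v) (smult A \<beta> y)" unfolding \<beta>_def by (rule kke[OF vc])
      have e2: "kk v = add A c (smult A (\<epsilon> / \<kappa>) x)"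
        unfolding c_def using cancel_add_neg[OF kv(1) xc, of "\<epsilon> / \<kappa>"] by simp
      have "v = add A (add A c (smult A (\<epsilon> / \<kappa>) x)) (smult A \<beta> y)" using e1 e2 by simp
      also have "\<dots> = add A (add A (smult A (\<epsilon> / \<kappa>) x) (smult A \<beta> y)) c"
        using ccar xc yc by (simp add: add_ac)
      finally show "\<exists>\<alpha> \<beta>. \<exists>c\<in>center A. v = add A (add A (smult A \<alpha> x) (smult A \<beta> y)) c" using cc by blast
    qed (use xc yc in simp_all)
  qed
qed

end



lemma (in QT) q_hom: "p \<in> {0,1} \<Longrightarrow> hom Q p = cs ` hom A p"
  by (auto simp: hom_def q_even q_odd)

context LSA begin

lemma hom_smult: "p \<in> {0,1} \<Longrightarrow> x \<in> hom A p \<Longrightarrow> smult A c x \<in> hom A p"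
  using even_smult odd_smult by auto

lemma star:
  assumes z: "z \<in> carrier A" "z \<noteq> zero A" "z \<in> derived A"
    and zm: "\<forall>x\<in>carrier A. \<forall>y\<in>carrier A. \<exists>c. br A x y = smult A c z"
    and dimQ: "dim (quotient A (center A)) (carrier (quotient A (center A))) > 2"
    and p: "p \<in> {0,1}" and x: "x \<in> hom A p"
  shows "\<exists>q1 q2 a b. q1 \<in> {0,1} \<and> q2 \<in> {0,1} \<and> a \<in> hom A q1 \<and> b \<in> hom A q2 \<and>
     br A a x = zero A \<and> br A b x = zero A \<and> br A a b \<noteq> zero A"
proof (rule ccontr)
  assume "\<not> ?thesis"
  then have N: "\<And>q1 q2 a b. q1 \<in> {0,1} \<Longrightarrow> q2 \<in> {0,1} \<Longrightarrow> a \<in> hom A q1 \<Longrightarrow> b \<in> hom A q2 \<Longrightarrow>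
              br A a x = zero A \<Longrightarrow> br A b x = zero A \<Longrightarrow> br A a b = zero A" by blast
  have "\<exists>x1\<in>carrier A. \<exists>y1\<in>carrier A. \<forall>v\<in>carrier A. \<exists>\<alpha> \<beta>. \<exists>c\<in>center A.
            v = add A (add A (smult A \<alpha> x1) (smult A \<beta> y1)) c"
    by (rule span2[OF z zm p x]) (rule N; assumption)
  then obtain x1 y1 where xy: "x1 \<in> carrier A" "y1 \<in> carrier A"
    and sp: "\<forall>v\<in>carrier A. \<exists>\<alpha> \<beta>. \<exists>c\<in>center A. v = add A (add A (smult A \<alpha> x1) (smult A \<beta> y1)) c"
    by blast
  interpret QV: VS "quotient A (center A)" by unfold_locales (rule Z.q_vs)
  define S where "S = {Z.cs x1, Z.cs y1}"
  have Sc: "S \<subseteq> carrier Z.Q" unfolding S_def Z.q_carrier using xy by auto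
  have fS: "finite S" unfolding S_def by simp
  have cS: "card S \<le> 2" unfolding S_def by (cases "Z.cs x1 = Z.cs y1") auto
  have "carrier Z.Q \<subseteq> span_of Z.Q S"
  proof
    fix V assume "V \<in> carrier Z.Q"
    then obtain v where v: "v \<in> carrier A" "V = Z.cs v" unfolding Z.q_carrier by blast
    obtain \<alpha> \<beta> c where abc: "c \<in> center A" "v = add A (add A (smult A \<alpha> x1) (smult A \<beta> y1)) c"
      using sp v by blast
    have "V = Z.cs (add A (smult A \<alpha> x1) (smult A \<beta> y1))"
      using v abc Z.coset_add_I xy by simp
    also have "\<dots> = lincomb Z.Q [\<alpha>, \<beta>] [Z.cs x1, Z.cs y1]"
      using xy by (simp add: Z.q_smult Z.q_add Z.q_zero)
    finally show "V \<in> span_of Z.Q S" unfolding span_of_def S_def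
      by (intro CollectI exI[of _ "[\<alpha>, \<beta>]"] exI[of _ "[Z.cs x1, Z.cs y1]"]) simp
  qed
  then obtain bs where "is_basis Z.Q (carrier Z.Q) bs" "length bs \<le> card S"
    using QV.basis_exists[OF fS Sc QV.subspace_carrier] by blast
  then have "dim Z.Q (carrier Z.Q) \<le> 2" using QV.dim_le cS by fastforce
  then show False using dimQ by simp
qed

end

theorem mainTheorem7:
  fixes L :: "('k::field, 'v) lsa"
  assumes char2: "(2::'k) \<noteq> 0" and char3: "(3::'k) \<noteq> 0"
    and lsa: "lie_superalgebra L"
    and fd: "fin_dim L (carrier L)"
    and nil: "nilpotent L"
    and dimL': "dim L (derived L \<inter> even L) + dim L (derived L \<inter> odd L) = 1"
    and dimQ: "dim (quotient L (center L)) (carrier (quotient L (center L))) > 2"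
  shows "\<not> capable TYPE('h) L"
proof
  interpret LL: LSA L by (rule LSA.intro) (rule lsa)
  obtain z where z: "z \<in> carrier L" "z \<noteq> zero L" "z \<in> derived L"
    and zm: "\<forall>x\<in>carrier L. \<forall>y\<in>carrier L. \<exists>c. br L x y = smult L c z"
    using LL.derived_z[OF fd dimL'] by blast
  assume "capable TYPE('h) L"
  then obtain H :: "('k, 'h) lsa" where lsaH: "lie_superalgebra H" and iso: "lsa_iso L (quotient H (center H))"
    unfolding capable_def by blast
  interpret HH: LSA H by (rule LSA.intro) (rule lsaH)
  let ?Q = "quotient H (center H)"
  let ?p = "coset H (center H)"
  obtain f where bij: "bij_betw f (carrier L) (carrier ?Q)"
    and fe: "f ` even L = even ?Q" and fo: "f ` odd L = odd ?Q"
    and fadd: "\<forall>x\<in>carrier L. \<forall>y\<in>carrier L. f (add L x y) = add ?Q (f x) (f y)"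
    and fsm: "\<forall>c. \<forall>x\<in>carrier L. f (smult L c x) = smult ?Q c (f x)"
    and fbr: "\<forall>x\<in>carrier L. \<forall>y\<in>carrier L. f (br L x y) = br ?Q (f x) (f y)"
    using iso unfolding lsa_iso_def by blast
  have fhom: "f ` hom L p = ?p ` hom H p" if "p \<in> {0,1}" for p
    using that fe fo HH.Z.q_hom[OF that] by (auto simp: hom_def)
  have fc: "f x \<in> ?p ` carrier H" if "x \<in> carrier L" for x
    using bij that HH.Z.q_carrier unfolding bij_betw_def by (metis imageI)
  have f0: "f (zero L) = zero ?Q"
  proof -
    obtain u where u: "u \<in> carrier H" "f (zero L) = ?p u" using fc[OF LL.zero_c] by blast
    have "f (smult L 0 (zero L)) = smult ?Q 0 (f (zero L))" using fsm LL.zero_c by blast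
    then have "f (zero L) = smult ?Q 0 (f (zero L))" by simp
    also have "\<dots> = ?p (zero H)" using u HH.Z.q_smult by simp
    finally show ?thesis using HH.Z.q_zero by simp
  qed
  have lift: "\<exists>a'. a' \<in> hom H p \<and> ?p a' = f a" if "p \<in> {0,1}" "a \<in> hom L p" for p a
  proof -
    have "f a \<in> ?p ` hom H p" using fhom[OF that(1)] that(2) by blast
    then show ?thesis by force
  qed
  have central: "w \<in> center H" if wc: "w \<in> carrier H" and wz: "?p w = f z" for w
    unfolding center_def
  proof (intro CollectI conjI ballI)
    show "w \<in> carrier H" by fact
    fix h assume hc: "h \<in> carrier H"
    show "br H w h = zero H"
    proof (rule HH.br_zero_hom_r[OF wc hc])
      fix q h assume q: "q \<in> {0,1}" and h: "h \<in> hom H q"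
      have hC: "h \<in> carrier H" using HH.hom_c q h by blast
      have "?p h \<in> f ` hom L q" using fhom[OF q] h by blast
      then obtain x where x: "x \<in> hom L q" "f x = ?p h" by blast
      have xc: "x \<in> carrier L" using LL.hom_c q x by blast
      obtain q1 q2 a b where ab: "q1 \<in> {0,1}" "q2 \<in> {0,1}" "a \<in> hom L q1" "b \<in> hom L q2"
        "br L a x = zero L" "br L b x = zero L" "br L a b \<noteq> zero L"
        using LL.star[OF z zm dimQ q x(1)] by blast
      have ac: "a \<in> carrier L" and bc: "b \<in> carrier L" using ab LL.hom_c by blast+
      obtain c where c: "br L a b = smult L c z" using zm ac bc by blast
      have c0: "c \<noteq> 0" using c ab(7) z by auto
      define a1 where "a1 = smult L (inverse c) a"
      have a1h: "a1 \<in> hom L q1" unfolding a1_def using LL.hom_smult ab by blast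
      have a1c: "a1 \<in> carrier L" using a1h ab LL.hom_c by blast
      have a1b: "br L a1 b = z" unfolding a1_def using c c0 ac bc z by (simp add: LL.br_smult_l)
      have a1x: "br L a1 x = zero L" unfolding a1_def using ab ac xc by (simp add: LL.br_smult_l)
      obtain a' where a': "a' \<in> hom H q1" "?p a' = f a1" using lift[OF ab(1) a1h] by blast
      obtain b' where b': "b' \<in> hom H q2" "?p b' = f b" using lift[OF ab(2,4)] by blast
      have a'c: "a' \<in> carrier H" and b'c: "b' \<in> carrier H" using a' b' ab HH.hom_c by blast+
      define w0 where "w0 = br H a' b'"
      have w0c: "w0 \<in> carrier H" unfolding w0_def using a'c b'c by simp
      have pw0: "?p w0 = f z"
      proof -
        have "?p w0 = br ?Q (?p a') (?p b')" unfolding w0_def using HH.q_br[OF a'c b'c] by simp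
        also have "\<dots> = f (br L a1 b)" using a' b' fbr a1c bc by simp
        finally show ?thesis using a1b by simp
      qed
      have cen: "br H u h \<in> center H" if u: "u \<in> carrier H" "?p u = f v" "v \<in> carrier L" "br L v x = zero L" for u v
      proof -
        have "?p (br H u h) = br ?Q (?p u) (?p h)" using HH.q_br[OF u(1) hC] by simp
        also have "\<dots> = f (br L v x)" using fbr[rule_format, OF u(3) xc] u(2) x(2) by simp
        also have "\<dots> = ?p (zero H)" using u f0 HH.Z.q_zero by simp
        finally obtain i where "i \<in> center H" "br H u h = add H (zero H) i"
          using HH.Z.coset_eq u hC by (metis HH.br_c)
        then show ?thesis using HH.center_c by simp
      qed
      have ca: "br H a' h \<in> center H" using cen[OF a'c a'(2) a1c a1x] .
      have cb: "br H b' h \<in> center H" using cen[OF b'c b'(2) bc ab(6)] .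
      have j1: "br H a' (br H b' h) = zero H" using HH.center_r[OF cb a'c] .
      have "br H h a' = smult H (- psign q q1) (br H a' h)" using HH.antisym[OF q ab(1) h a'(1)] .
      then have "br H h a' \<in> center H" using ca HH.Z.I_smult by simp
      then have j2: "br H b' (br H h a') = zero H" using HH.center_r b'c by blast
      have J: "add H (smult H (psign q1 q) (br H a' (br H b' h)))
          (add H (smult H (psign q2 q1) (br H b' (br H h a')))
                 (smult H (psign q q2) (br H h (br H a' b')))) = zero H"
        using HH.jacobi[OF ab(1,2) q a'(1) b'(1) h] .
      have hw: "br H h w0 \<in> carrier H" using hC w0c by simp
      have "smult H (psign q q2) (br H h w0) = zero H" using J j1 j2 hw unfolding w0_def by simp
      then have hw0: "br H h w0 = zero H" using HH.smult_eq_zero[OF hw] HH.psign_nz by blast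
      have w0h: "w0 \<in> hom H ((q1 + q2) mod 2)" unfolding w0_def using HH.br_grade ab a' b' by blast
      have "(q1 + q2) mod 2 \<in> {0,1}" by auto
      then have "br H w0 h = zero H" by (rule HH.antisym0[OF _ q w0h h hw0])
      moreover obtain i where i: "i \<in> center H" "w = add H w0 i"
        using HH.Z.coset_eq[OF wc] wz pw0 by metis
      moreover have "br H w h = add H (br H w0 h) (br H i h)"
        using i w0c hC HH.center_c by (simp add: HH.br_add_l)
      ultimately show "br H w h = zero H" using HH.center_l[OF i(1) hC] by simp
    qed
  qed
  obtain w where w: "w \<in> carrier H" "?p w = f z" using fc[OF z(1)] by force
  have "w \<in> center H" using central[OF w] .
  then have "?p w = ?p (zero H)" using HH.Z.coset_add_I[of "zero H" w] HH.center_c w(1) by simp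
  then have "f z = f (zero L)" using w f0 HH.Z.q_zero by simp
  then have "z = zero L" using bij z(1) LL.zero_c unfolding bij_betw_def inj_on_def by blast
  then show False using z by simp
qed


end
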